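(* Let $R_1, Q_1,\dots,Q_s\in\mathbb{P}^1$ with $Q_1,\dots,Q_s$ distinct, let $P_{1j}=R_1\times Q_j$, and let $Z=\{(P_{11};m_{11}),\dots,(P_{1s};m_{1s})\}$ be a fat point scheme (so its support lies on the line defined by a form of degree $(1,0)$). Let $m=\max_j m_{1j}$ and for $h=0,\dots,m-1$ put $a_h=\sum_{j=1}^s (m_{1j}-h)_+$, where $(n)_+=\max\{0,n\}$. Then for all $(i,j)\in\mathbb{N}^2$, $$H_Z(i,j)=\sum_{h=0}^{\min\{i,\,m-1\}}\min\{j+1,\,a_h\}.$$ (Equivalently, written as a matrix with rows indexed by $i$ and columns by $j$, $H_Z$ is the sum over $h=0,\dots,m-1$ of the matrix that is zero in rows $0,\dots,h-1$ and whose every row $i\ge h$ is $(1,2,\dots,a_h-1,a_h,a_h,\dots)$.)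
   Context: $\mathbf{k}$ is algebraically closed, $R=\mathbf{k}[x_0,x_1,y_0,y_1]$ bigraded with $\deg x_i=(1,0)$, $\deg y_i=(0,1)$. A point $P=[a_0:a_1]\times[b_0:b_1]$ has ideal $\wp_P=(a_1x_0-a_0x_1,b_1y_0-b_0y_1)$; a fat point scheme $Z=\{(P_1;m_1),\dots,(P_s;m_s)\}$ (distinct points, positive integers $m_i$) has ideal $I_Z=\bigcap\wp_{P_i}^{m_i}$ and Hilbert function $H_Z(i,j)=\dim_{\mathbf{k}}(R/I_Z)_{(i,j)}$. *)

theory Defs
  imports "HOL-Computational_Algebra.Polynomial" "HOL-Library.Poly_Mapping"
begin

text \<open>Polynomials in the variables x0 = V 0, x1 = V 1, y0 = V 2, y1 = V 3 over a field 'k,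
  represented as finitely supported maps from monomials (exponent vectors) to coefficients.\<close>

type_synonym 'k mpoly4 = "(nat \<Rightarrow>\<^sub>0 nat) \<Rightarrow>\<^sub>0 'k"

definition V :: "nat \<Rightarrow> 'k::comm_ring_1 mpoly4" where
  "V n = Poly_Mapping.single (Poly_Mapping.single n 1) 1"

definition const4 :: "'k::comm_ring_1 \<Rightarrow> 'k mpoly4" where
  "const4 c = Poly_Mapping.single 0 c"

definition scale4 :: "'k::field \<Rightarrow> 'k mpoly4 \<Rightarrow> 'k mpoly4" where
  "scale4 c F = const4 c * F"

definition bihom :: "nat \<Rightarrow> nat \<Rightarrow> 'k::comm_ring_1 mpoly4 set" where
  "bihom i j = {F. \<forall>e \<in> Poly_Mapping.keys F. Poly_Mapping.keys e \<subseteq> {0,1,2,3} \<and>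
        Poly_Mapping.lookup e 0 + Poly_Mapping.lookup e 1 = i \<and> Poly_Mapping.lookup e 2 + Poly_Mapping.lookup e 3 = j}"

definition R4 :: "'k::comm_ring_1 mpoly4 set" where
  "R4 = {F. \<forall>e \<in> Poly_Mapping.keys F. Poly_Mapping.keys e \<subseteq> {0,1,2,3}}"

definition ideal_gen :: "'k::comm_ring_1 mpoly4 set \<Rightarrow> 'k mpoly4 set" where
  "ideal_gen S = {F. \<exists>T G. finite T \<and> T \<subseteq> S \<and>
        (\<forall>t\<in>T. G t \<in> R4) \<and> F = (\<Sum>t\<in>T. G t * t)}"

definition ideal_pow :: "'k::comm_ring_1 mpoly4 set \<Rightarrow> nat \<Rightarrow> 'k mpoly4 set" where
  "ideal_pow I m = ideal_gen {prod_list fs | fs. length fs = m \<and> set fs \<subseteq> I}"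

text \<open>A point of P^1 x P^1 is given by homogeneous coordinates ((a0,a1),(b0,b1)),
  with (a0,a1) and (b0,b1) nonzero.  Its ideal is (a1 x0 - a0 x1, b1 y0 - b0 y1).\<close>
definition pt_ideal :: "('k::comm_ring_1 \<times> 'k) \<times> ('k \<times> 'k) \<Rightarrow> 'k mpoly4 set" where
  "pt_ideal P = (case P of ((a0,a1),(b0,b1)) \<Rightarrow>
     ideal_gen {const4 a1 * V 0 - const4 a0 * V 1, const4 b1 * V 2 - const4 b0 * V 3})"

definition proj_pt :: "'k::field \<times> 'k \<Rightarrow> bool" where
  "proj_pt a \<longleftrightarrow> a \<noteq> (0,0)"

text \<open>Equality of points of P^1 (proportional homogeneous coordinates).\<close>
definition proj_eq :: "'k::field \<times> 'k \<Rightarrow> 'k \<times> 'k \<Rightarrow> bool" where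
  "proj_eq a b \<longleftrightarrow> fst a * snd b = snd a * fst b"

definition fat_ideal :: "nat \<Rightarrow> (nat \<Rightarrow> ('k::comm_ring_1 \<times> 'k) \<times> ('k \<times> 'k)) \<Rightarrow> (nat \<Rightarrow> nat) \<Rightarrow> 'k mpoly4 set" where
  "fat_ideal s P m = R4 \<inter> (\<Inter>k\<in>{..<s}. ideal_pow (pt_ideal (P k)) (m k))"

text \<open>Hilbert function H_Z(i,j) = dim_k (R/I_Z)_(i,j) = dim_k R_(i,j) - dim_k (I_Z)_(i,j)
  (I_Z is bihomogeneous, so (R/I_Z)_(i,j) = R_(i,j) / (I_Z \<inter> R_(i,j))).\<close>
definition hilb_fat :: "nat \<Rightarrow> (nat \<Rightarrow> ('k::field \<times> 'k) \<times> ('k \<times> 'k)) \<Rightarrow> (nat \<Rightarrow> nat) \<Rightarrow> nat \<Rightarrow> nat \<Rightarrow> nat" where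
  "hilb_fat s P m i j = vector_space.dim (scale4 :: 'k \<Rightarrow> _) (bihom i j) - vector_space.dim (scale4 :: 'k \<Rightarrow> _) (fat_ideal s P m \<inter> bihom i j)"

end

theory Submission
  imports Defs "HOL-Computational_Algebra.Polynomial_Factorial"
begin


lemma const4_mult: "const4 (a*b) = const4 a * (const4 b :: 'k::comm_ring_1 mpoly4)"
  by (simp add: const4_def mult_single)
lemma const4_add: "const4 (a+b) = const4 a + (const4 b :: 'k::comm_ring_1 mpoly4)"
  by (simp add: const4_def single_add)
lemma const4_diff: "const4 (a-b) = const4 a - (const4 b :: 'k::comm_ring_1 mpoly4)"
  by (simp add: const4_def single_diff)
lemma const4_one[simp]: "const4 1 = (1 :: 'k::comm_ring_1 mpoly4)"
  by (simp add: const4_def)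
lemma const4_zero[simp]: "const4 0 = (0 :: 'k::comm_ring_1 mpoly4)"
  by (simp add: const4_def)

interpretation V4: vector_space "scale4 :: 'k::field \<Rightarrow> 'k mpoly4 \<Rightarrow> 'k mpoly4"
  by unfold_locales (simp_all add: scale4_def const4_add const4_mult algebra_simps)

lemma mpoly_expand:
  "F = (\<Sum>e\<in>Poly_Mapping.keys F. Poly_Mapping.single e (Poly_Mapping.lookup F e))"
proof (rule poly_mapping_eqI)
  fix x
  show "Poly_Mapping.lookup F x = Poly_Mapping.lookup (\<Sum>e\<in>Poly_Mapping.keys F. Poly_Mapping.single e (Poly_Mapping.lookup F e)) x"
    by (simp add: lookup_sum lookup_single when_def in_keys_iff)
qed

section \<open>Evaluation homomorphism\<close>

lemma pconst_add: "[:a+b:] = [:a:] + [:b::'a::comm_ring_1:]" by simp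
lemma smult_pconst_add: "smult [:a+b:] p = smult [:a:] p + smult [:b::'a::comm_ring_1:] p"
  by (metis pconst_add smult_add_left)
lemma pconst_one: "[:1::'a::comm_ring_1:] = 1" by (simp add: one_pCons)

definition mon :: "(nat \<Rightarrow> 'k::field poly poly) \<Rightarrow> (nat \<Rightarrow>\<^sub>0 nat) \<Rightarrow> 'k poly poly" where
  "mon \<sigma> e = (\<Prod>n\<in>Poly_Mapping.keys e. \<sigma> n ^ Poly_Mapping.lookup e n)"

definition ev :: "(nat \<Rightarrow> 'k::field poly poly) \<Rightarrow> 'k mpoly4 \<Rightarrow> 'k poly poly" where
  "ev \<sigma> F = (\<Sum>e\<in>Poly_Mapping.keys F. [:[:Poly_Mapping.lookup F e:]:] * mon \<sigma> e)"

lemma mon_superset: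
  assumes "finite S" "Poly_Mapping.keys e \<subseteq> S"
  shows "mon \<sigma> e = (\<Prod>n\<in>S. \<sigma> n ^ Poly_Mapping.lookup e n)"
  unfolding mon_def
  by (rule prod.mono_neutral_left) (use assms in \<open>auto simp: in_keys_iff\<close>)

lemma mon_zero[simp]: "mon \<sigma> 0 = 1"
  by (simp add: mon_def)

lemma mon_add: "mon \<sigma> (e + f) = mon \<sigma> e * mon \<sigma> f"
proof -
  let ?S = "Poly_Mapping.keys e \<union> Poly_Mapping.keys f"
  have fin: "finite ?S" by simp
  have "mon \<sigma> (e+f) = (\<Prod>n\<in>?S. \<sigma> n ^ Poly_Mapping.lookup (e+f) n)"
    by (rule mon_superset[OF fin]) (rule keys_add)
  also have "\<dots> = (\<Prod>n\<in>?S. \<sigma> n ^ Poly_Mapping.lookup e n * \<sigma> n ^ Poly_Mapping.lookup f n)"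
    by (simp add: lookup_add power_add)
  also have "\<dots> = mon \<sigma> e * mon \<sigma> f"
    by (simp add: prod.distrib mon_superset[OF fin])
  finally show ?thesis .
qed

lemma ev_superset:
  assumes "finite S" "Poly_Mapping.keys F \<subseteq> S"
  shows "ev \<sigma> F = (\<Sum>e\<in>S. [:[:Poly_Mapping.lookup F e:]:] * mon \<sigma> e)"
  unfolding ev_def
  by (rule sum.mono_neutral_left) (use assms in \<open>auto simp: in_keys_iff\<close>)

lemma ev_zero[simp]: "ev \<sigma> 0 = 0"
  by (simp add: ev_def)

lemma ev_add: "ev \<sigma> (F + G) = ev \<sigma> F + ev \<sigma> G"
proof -
  let ?S = "Poly_Mapping.keys F \<union> Poly_Mapping.keys G"
  have fin: "finite ?S" by simp
  have "ev \<sigma> (F+G) = (\<Sum>e\<in>?S. [:[:Poly_Mapping.lookup (F+G) e:]:] * mon \<sigma> e)"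
    by (rule ev_superset[OF fin]) (rule keys_add)
  also have "\<dots> = ev \<sigma> F + ev \<sigma> G"
    by (simp add: ev_superset[OF fin] lookup_add sum.distrib distrib_right smult_pconst_add)
  finally show ?thesis .
qed

lemma ev_uminus: "ev \<sigma> (- F) = - ev \<sigma> F"
  using ev_add[of \<sigma> F "-F"] by (simp add: eq_neg_iff_add_eq_0 add.commute)

lemma ev_diff: "ev \<sigma> (F - G) = ev \<sigma> F - ev \<sigma> G"
  using ev_add[of \<sigma> F "-G"] ev_uminus[of \<sigma> G] by simp

lemma ev_sum: "ev \<sigma> (\<Sum>x\<in>A. f x) = (\<Sum>x\<in>A. ev \<sigma> (f x))"
  by (induction A rule: infinite_finite_induct) (auto simp: ev_add)

lemma ev_single: "ev \<sigma> (Poly_Mapping.single e c) = [:[:c:]:] * mon \<sigma> e"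
  by (simp add: ev_def)

lemma ev_mult: "ev \<sigma> (F * G) = ev \<sigma> F * ev \<sigma> G"
proof -
  have "F * G = (\<Sum>e\<in>Poly_Mapping.keys F. Poly_Mapping.single e (Poly_Mapping.lookup F e)) *
                (\<Sum>f\<in>Poly_Mapping.keys G. Poly_Mapping.single f (Poly_Mapping.lookup G f))"
    using mpoly_expand[of F] mpoly_expand[of G] by simp
  also have "\<dots> = (\<Sum>e\<in>Poly_Mapping.keys F. \<Sum>f\<in>Poly_Mapping.keys G.
       Poly_Mapping.single (e+f) (Poly_Mapping.lookup F e * Poly_Mapping.lookup G f))"
    by (simp add: sum_distrib_left sum_distrib_right mult_single) (rule sum.swap)
  finally have "ev \<sigma> (F*G) = (\<Sum>e\<in>Poly_Mapping.keys F. \<Sum>f\<in>Poly_Mapping.keys G.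
       [:[:Poly_Mapping.lookup F e:]:] * mon \<sigma> e * ([:[:Poly_Mapping.lookup G f:]:] * mon \<sigma> f))"
    by (simp add: ev_sum ev_single mon_add mult_ac)
  also have "\<dots> = ev \<sigma> F * ev \<sigma> G"
    unfolding ev_def sum_product by (intro sum.cong refl; simp only: mult_ac)
  finally show ?thesis .
qed

lemma ev_const4: "ev \<sigma> (const4 c) = [:[:c:]:]"
  by (simp add: const4_def ev_single)

lemma ev_one[simp]: "ev \<sigma> 1 = 1"
  using ev_const4[of \<sigma> 1] by (simp add: pconst_one)

lemma ev_V: "ev \<sigma> (V n) = \<sigma> n"
  by (simp add: V_def ev_single mon_def pconst_one)

lemma ev_scale4: "ev \<sigma> (scale4 c F) = [:[:c:]:] * ev \<sigma> F"
  by (simp add: scale4_def ev_mult ev_const4)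

lemma ev_power: "ev \<sigma> (F ^ n) = ev \<sigma> F ^ n"
  by (induction n) (simp_all add: ev_mult)

lemma ev_prod: "ev \<sigma> (\<Prod>x\<in>A. f x) = (\<Prod>x\<in>A. ev \<sigma> (f x))"
  by (induction A rule: infinite_finite_induct) (auto simp: ev_mult)

lemma ev_prod_list: "ev \<sigma> (prod_list fs) = prod_list (map (ev \<sigma>) fs)"
  by (induction fs) (simp_all add: ev_mult)

lemma ev_sum_scale: "ev \<sigma> (\<Sum>x\<in>A. scale4 (u x) (f x)) = (\<Sum>x\<in>A. [:[:u x:]:] * ev \<sigma> (f x))"
  by (simp add: ev_sum ev_scale4)



lemma keys_add_nat: "Poly_Mapping.keys (a + b :: nat \<Rightarrow>\<^sub>0 nat) = Poly_Mapping.keys a \<union> Poly_Mapping.keys b"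
  by (auto simp: in_keys_iff lookup_add)

lemma R4_add: "F \<in> R4 \<Longrightarrow> G \<in> R4 \<Longrightarrow> F + G \<in> R4"
  unfolding R4_def using keys_add[of F G] by blast

lemma R4_mult: "F \<in> R4 \<Longrightarrow> G \<in> R4 \<Longrightarrow> F * G \<in> R4"
  unfolding R4_def using keys_mult[of F G] by (fastforce simp: keys_add_nat)

lemma R4_uminus: "F \<in> R4 \<Longrightarrow> - F \<in> R4"
  unfolding R4_def by (simp add: keys_minus)

lemma R4_diff: "F \<in> R4 \<Longrightarrow> G \<in> R4 \<Longrightarrow> F - G \<in> R4"
  using R4_add[of F "-G"] R4_uminus[of G] by simp

lemma R4_zero[simp]: "0 \<in> R4" by (simp add: R4_def)

lemma R4_const4[simp]: "const4 c \<in> R4" by (simp add: R4_def const4_def)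

lemma R4_one[simp]: "1 \<in> R4" using R4_const4[of 1] by simp

lemma R4_V: "n \<le> 3 \<Longrightarrow> V n \<in> R4" by (auto simp: R4_def V_def)

lemma R4_power: "F \<in> R4 \<Longrightarrow> F ^ n \<in> R4"
  by (induction n) (simp_all add: R4_mult)

lemma R4_prod: "(\<And>x. x \<in> A \<Longrightarrow> f x \<in> R4) \<Longrightarrow> (\<Prod>x\<in>A. f x) \<in> R4"
  by (induction A rule: infinite_finite_induct) (auto simp: R4_mult)

lemma R4_sum: "(\<And>x. x \<in> A \<Longrightarrow> f x \<in> R4) \<Longrightarrow> (\<Sum>x\<in>A. f x) \<in> R4"
  by (induction A rule: infinite_finite_induct) (auto simp: R4_add)

lemma R4_prod_list: "set fs \<subseteq> R4 \<Longrightarrow> prod_list fs \<in> R4"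
  by (induction fs) (auto simp: R4_mult)

lemma bihom_add: "F \<in> bihom i j \<Longrightarrow> G \<in> bihom i j \<Longrightarrow> F + G \<in> bihom i j"
  unfolding bihom_def using keys_add[of F G] by blast

lemma bihom_mult: "F \<in> bihom i j \<Longrightarrow> G \<in> bihom i' j' \<Longrightarrow> F * G \<in> bihom (i+i') (j+j')"
  unfolding bihom_def using keys_mult[of F G] by (fastforce simp: keys_add_nat lookup_add)

lemma bihom_uminus: "F \<in> bihom i j \<Longrightarrow> - F \<in> bihom i j"
  unfolding bihom_def by (simp add: keys_minus)

lemma bihom_diff: "F \<in> bihom i j \<Longrightarrow> G \<in> bihom i j \<Longrightarrow> F - G \<in> bihom i j"
  using bihom_add[of F i j "-G"] bihom_uminus[of G] by simp

lemma bihom_zero[simp]: "0 \<in> bihom i j" by (simp add: bihom_def)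

lemma bihom_const4[simp]: "const4 c \<in> bihom 0 0" by (simp add: bihom_def const4_def)

lemma bihom_one[simp]: "1 \<in> bihom 0 0" using bihom_const4[of 1] by simp

lemma bihom_V0: "V 0 \<in> bihom 1 0" by (auto simp: bihom_def V_def lookup_single when_def)
lemma bihom_V1: "V 1 \<in> bihom 1 0" by (auto simp: bihom_def V_def lookup_single when_def)
lemma bihom_V2: "V 2 \<in> bihom 0 1" by (auto simp: bihom_def V_def lookup_single when_def)
lemma bihom_V3: "V 3 \<in> bihom 0 1" by (auto simp: bihom_def V_def lookup_single when_def)

lemma bihom_scale: "F \<in> bihom i j \<Longrightarrow> scale4 c F \<in> bihom i j"
  unfolding scale4_def using bihom_mult[OF bihom_const4[of c], of F i j] by simp

lemma bihom_cmult: "F \<in> bihom i j \<Longrightarrow> const4 c * F \<in> bihom i j"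
  using bihom_mult[OF bihom_const4[of c], of F i j] by simp

lemma bihom_power: "F \<in> bihom i j \<Longrightarrow> F ^ n \<in> bihom (n*i) (n*j)"
  by (induction n) (simp_all add: bihom_mult)

lemma bihom_sum: "(\<And>x. x \<in> A \<Longrightarrow> f x \<in> bihom i j) \<Longrightarrow> (\<Sum>x\<in>A. f x) \<in> bihom i j"
  by (induction A rule: infinite_finite_induct) (auto simp: bihom_add)

lemma bihom_prod: "(\<And>x. x \<in> A \<Longrightarrow> f x \<in> bihom 0 (g x)) \<Longrightarrow> (\<Prod>x\<in>A. f x) \<in> bihom 0 (\<Sum>x\<in>A. g x)"
proof (induction A rule: infinite_finite_induct)
  case (insert x F)
  have "f x * prod f F \<in> bihom (0+0) (g x + sum g F)"
    by (rule bihom_mult) (use insert in auto)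
  then show ?case using insert by simp
qed auto

lemma bihom_R4: "bihom i j \<subseteq> R4"
  by (auto simp: bihom_def R4_def)

lemma subspace_bihom: "V4.subspace (bihom i j)"
  by (auto simp: V4.subspace_def bihom_add bihom_scale)

lemma ideal_gen_base: "t \<in> S \<Longrightarrow> t \<in> ideal_gen S"
  unfolding ideal_gen_def by (rule CollectI, rule exI[of _ "{t}"], rule exI[of _ "\<lambda>_. 1"]) auto

lemma ideal_gen_zero: "0 \<in> ideal_gen S"
  unfolding ideal_gen_def by (rule CollectI, rule exI[of _ "{}"]) auto

lemma ideal_gen_add:
  assumes "F \<in> ideal_gen S" "F' \<in> ideal_gen S"
  shows "F + F' \<in> ideal_gen S"
proof -
  obtain T G where A1: "finite T" and A2: "T \<subseteq> S" and A3: "\<forall>t\<in>T. G t \<in> R4" and A4: "F = (\<Sum>t\<in>T. G t * t)"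
    using assms(1) unfolding ideal_gen_def by blast
  obtain T' G' where B1: "finite T'" and B2: "T' \<subseteq> S" and B3: "\<forall>t\<in>T'. G' t \<in> R4" and B4: "F' = (\<Sum>t\<in>T'. G' t * t)"
    using assms(2) unfolding ideal_gen_def by blast
  define H where "H t = (if t \<in> T then G t else 0) + (if t \<in> T' then G' t else 0)" for t
  have fin: "finite (T \<union> T')" using A1 B1 by blast
  have e0: "(\<Sum>t\<in>T \<union> T'. H t * t) = (\<Sum>t\<in>T \<union> T'. (if t \<in> T then G t else 0) * t) + (\<Sum>t\<in>T \<union> T'. (if t \<in> T' then G' t else 0) * t)"
    unfolding H_def distrib_right sum.distrib by (rule refl)
  have e1: "(\<Sum>t\<in>T \<union> T'. (if t \<in> T then G t else 0) * t) = (\<Sum>t\<in>T. G t * t)"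
    by (rule sum.mono_neutral_cong_right[OF fin]) auto
  have e2: "(\<Sum>t\<in>T \<union> T'. (if t \<in> T' then G' t else 0) * t) = (\<Sum>t\<in>T'. G' t * t)"
    by (rule sum.mono_neutral_cong_right[OF fin]) auto
  have c1: "F + F' = (\<Sum>t\<in>T \<union> T'. H t * t)" unfolding e0 e1 e2 A4 B4 by (rule refl)
  have c2: "\<forall>t\<in>T \<union> T'. H t \<in> R4" using A3 B3 unfolding H_def by (auto intro: R4_add)
  have c3: "T \<union> T' \<subseteq> S" using A2 B2 by blast
  show ?thesis unfolding ideal_gen_def
    by (rule CollectI, rule exI[of _ "T \<union> T'"], rule exI[of _ H]) (intro conjI fin c1 c2 c3)
qed

lemma ideal_gen_mult:
  assumes "F \<in> ideal_gen S" "r \<in> R4"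
  shows "r * F \<in> ideal_gen S"
proof -
  obtain T G where A1: "finite T" and A2: "T \<subseteq> S" and A3: "\<forall>t\<in>T. G t \<in> R4" and A4: "F = (\<Sum>t\<in>T. G t * t)"
    using assms(1) unfolding ideal_gen_def by blast
  have c1: "r * F = (\<Sum>t\<in>T. (\<lambda>t. r * G t) t * t)" unfolding A4 by (simp add: sum_distrib_left mult_ac)
  have c2: "\<forall>t\<in>T. (\<lambda>t. r * G t) t \<in> R4" using A3 assms(2) by (auto intro: R4_mult)
  show ?thesis unfolding ideal_gen_def
    by (rule CollectI, rule exI[of _ T], rule exI[of _ "\<lambda>t. r * G t"]) (intro conjI A1 A2 c1 c2)
qed

lemma ideal_gen_R4: "S \<subseteq> R4 \<Longrightarrow> ideal_gen S \<subseteq> R4"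
proof
  fix F assume S: "S \<subseteq> R4" and "F \<in> ideal_gen S"
  then obtain T G where A1: "finite T" and A2: "T \<subseteq> S" and A3: "\<forall>t\<in>T. G t \<in> R4" and A4: "F = (\<Sum>t\<in>T. G t * t)"
    unfolding ideal_gen_def by blast
  show "F \<in> R4" unfolding A4 using A2 A3 S by (intro R4_sum R4_mult) auto
qed


lemma ideal_gen_scale: "F \<in> ideal_gen S \<Longrightarrow> scale4 c F \<in> ideal_gen S"
  unfolding scale4_def by (rule ideal_gen_mult) auto

lemma ideal_gen_sum: "(\<And>x. x \<in> A \<Longrightarrow> f x \<in> ideal_gen S) \<Longrightarrow> (\<Sum>x\<in>A. f x) \<in> ideal_gen S"
  by (induction A rule: infinite_finite_induct) (auto simp: ideal_gen_add ideal_gen_zero)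

lemma ideal_gen_image:
  assumes "F \<in> ideal_gen S"
    and J0: "0 \<in> J" and Jadd: "\<And>a b. a \<in> J \<Longrightarrow> b \<in> J \<Longrightarrow> a + b \<in> J"
    and Jmult: "\<And>a b. b \<in> J \<Longrightarrow> a * b \<in> J"
    and SJ: "\<And>t. t \<in> S \<Longrightarrow> ev \<sigma> t \<in> J"
  shows "ev \<sigma> F \<in> J"
proof -
  obtain T G where
    A: "finite T" "T \<subseteq> S" "F = (\<Sum>t\<in>T. G t * t)"
    using assms(1) unfolding ideal_gen_def by blast
  have "ev \<sigma> F = (\<Sum>t\<in>T. ev \<sigma> (G t) * ev \<sigma> t)" unfolding A(3) ev_sum ev_mult by (rule refl)
  also have "\<dots> \<in> J"
    using A(1,2) proof (induction T rule: finite_induct)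
    case empty then show ?case using J0 by simp
  next
    case (insert x T)
    have "ev \<sigma> (G x) * ev \<sigma> x \<in> J" using insert.prems SJ Jmult by blast
    moreover have "(\<Sum>t\<in>T. ev \<sigma> (G t) * ev \<sigma> t) \<in> J" using insert by blast
    ultimately show ?case using insert.hyps Jadd by simp
  qed
  finally show ?thesis .
qed



section \<open>Order ideals in k[X][Y]\<close>

definition Jm :: "nat \<Rightarrow> 'k::field poly poly set" where
  "Jm m = {p. \<forall>\<alpha> \<beta>. \<alpha> + \<beta> < m \<longrightarrow> coeff (coeff p \<alpha>) \<beta> = 0}"

lemma J_mult:
  assumes "p \<in> Jm a" "q \<in> Jm b"
  shows "p * q \<in> Jm (a + b)"
  unfolding Jm_def
proof (intro CollectI allI impI)
  fix \<alpha> \<beta> assume lt: "\<alpha> + \<beta> < a + b"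
  have "coeff (coeff (p*q) \<alpha>) \<beta> = (\<Sum>i\<le>\<alpha>. \<Sum>k\<le>\<beta>. coeff (coeff p i) k * coeff (coeff q (\<alpha>-i)) (\<beta>-k))"
    by (simp add: coeff_mult coeff_sum)
  also have "\<dots> = 0"
  proof (intro sum.neutral ballI)
    fix i k assume ik: "i \<in> {..\<alpha>}" "k \<in> {..\<beta>}"
    show "coeff (coeff p i) k * coeff (coeff q (\<alpha>-i)) (\<beta>-k) = 0"
    proof (cases "i + k < a")
      case True then show ?thesis using assms(1) by (simp add: Jm_def)
    next
      case False then have "(\<alpha>-i) + (\<beta>-k) < b" using lt ik by auto
      then show ?thesis using assms(2) by (simp add: Jm_def)
    qed
  qed
  finally show "coeff (coeff (p*q) \<alpha>) \<beta> = 0" .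
qed

lemma J_zero_UNIV: "p \<in> Jm 0" by (simp add: Jm_def)

lemma J_multL: "q \<in> Jm b \<Longrightarrow> p * q \<in> Jm b"
  using J_mult[OF J_zero_UNIV[of p], of q b] by simp

lemma J_add: "p \<in> Jm a \<Longrightarrow> q \<in> Jm a \<Longrightarrow> p + q \<in> Jm a"
  by (simp add: Jm_def)

lemma J_0: "0 \<in> Jm a"
  by (simp add: Jm_def)

lemma J_prod_list: "set fs \<subseteq> Jm 1 \<Longrightarrow> prod_list fs \<in> Jm (length fs)"
proof (induction fs)
  case Nil then show ?case by (simp add: J_zero_UNIV)
next
  case (Cons f fs)
  then have "f * prod_list fs \<in> Jm (1 + length fs)" by (intro J_mult) auto
  then show ?case by simp
qed

definition Xv :: "'k::field poly poly" where "Xv = [:0, 1:]"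
definition Yv :: "'k::field poly poly" where "Yv = [:[:0, 1:]:]"

lemma Xv_J: "Xv \<in> Jm 1" by (simp add: Jm_def Xv_def)
lemma Yv_J: "Yv \<in> Jm 1" by (simp add: Jm_def Yv_def)

lemma Xv_pow: "Xv ^ n = monom 1 n"
  by (simp add: Xv_def monom_altdef)

lemma Yv_pow: "Yv ^ n = [:monom 1 n:]"
  by (simp add: Yv_def poly_const_pow monom_altdef)

lemma coeff_coeff_sum_monom:
  assumes "finite T"
  shows "coeff (coeff (\<Sum>t\<in>T. monom (monom (c t) (snd t)) (fst t)) \<alpha>) \<beta> = (if (\<alpha>, \<beta>) \<in> T then c (\<alpha>, \<beta>) else 0)"
proof -
  have e: "\<And>t. coeff (coeff (monom (monom (c t) (snd t)) (fst t)) \<alpha>) \<beta> = (if t = (\<alpha>,\<beta>) then c t else 0)"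
    by (auto simp: coeff_monom)
  show ?thesis unfolding coeff_sum e using assms by (simp add: sum.delta')
qed

section \<open>Points and adapted coordinates\<close>

definition cc :: "'k::field \<times> 'k \<Rightarrow> 'k \<times> 'k" where
  "cc a = (if snd a \<noteq> 0 then (0, 1 / snd a) else (1 / fst a, 0))"

lemma cc_det: "a \<noteq> (0, 0) \<Longrightarrow> snd a * snd (cc a) + fst a * fst (cc a) = 1"
  by (cases a) (auto simp: cc_def)

definition Lx :: "'k::field \<times> 'k \<Rightarrow> 'k mpoly4" where
  "Lx a = const4 (snd a) * V 0 - const4 (fst a) * V 1"
definition Lx' :: "'k::field \<times> 'k \<Rightarrow> 'k mpoly4" where
  "Lx' a = const4 (fst (cc a)) * V 0 + const4 (snd (cc a)) * V 1"
definition Ly :: "'k::field \<times> 'k \<Rightarrow> 'k mpoly4" where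
  "Ly b = const4 (snd b) * V 2 - const4 (fst b) * V 3"
definition Ly' :: "'k::field \<times> 'k \<Rightarrow> 'k mpoly4" where
  "Ly' b = const4 (fst (cc b)) * V 2 + const4 (snd (cc b)) * V 3"

lemma pt_ideal_eq: "pt_ideal (a, b) = ideal_gen {Lx a, Ly b}"
  by (cases a; cases b) (simp add: pt_ideal_def Lx_def Ly_def)

lemma bihom_Lx: "Lx a \<in> bihom 1 0"
  unfolding Lx_def by (intro bihom_diff bihom_cmult bihom_V0 bihom_V1)
lemma bihom_Lx': "Lx' a \<in> bihom 1 0"
  unfolding Lx'_def by (intro bihom_add bihom_cmult bihom_V0 bihom_V1)
lemma bihom_Ly: "Ly b \<in> bihom 0 1"
  unfolding Ly_def by (intro bihom_diff bihom_cmult bihom_V2 bihom_V3)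
lemma bihom_Ly': "Ly' b \<in> bihom 0 1"
  unfolding Ly'_def by (intro bihom_add bihom_cmult bihom_V2 bihom_V3)

lemma R4_Lx: "Lx a \<in> R4" using bihom_Lx bihom_R4 by blast
lemma R4_Ly: "Ly a \<in> R4" using bihom_Ly bihom_R4 by blast

definition sg :: "'k::field \<times> 'k \<Rightarrow> 'k \<times> 'k \<Rightarrow> nat \<Rightarrow> 'k poly poly" where
  "sg a b n = (if n = 0 then [:[:fst a:], [:snd (cc a):]:]
     else if n = 1 then [:[:snd a:], [:- fst (cc a):]:]
     else if n = 2 then [:[:fst b, snd (cc b):]:]
     else if n = 3 then [:[:snd b, - fst (cc b):]:] else 0)"

abbreviation th :: "'k::field \<times> 'k \<Rightarrow> 'k \<times> 'k \<Rightarrow> 'k mpoly4 \<Rightarrow> 'k poly poly" where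
  "th a b \<equiv> ev (sg a b)"

lemma th_Lx: "a \<noteq> (0,0) \<Longrightarrow> th a b (Lx a) = Xv"
  using cc_det[of a]
  by (simp add: Lx_def ev_diff ev_mult ev_const4 ev_V sg_def Xv_def)

lemma th_Lx': "a \<noteq> (0,0) \<Longrightarrow> th a b (Lx' a) = 1"
  using cc_det[of a]
  by (simp add: Lx'_def ev_add ev_mult ev_const4 ev_V sg_def one_pCons mult.commute add.commute)

lemma th_Ly: "th a b (Ly b') = [:[:snd b' * fst b - fst b' * snd b, snd b' * snd (cc b) + fst b' * fst (cc b):]:]"
  by (simp add: Ly_def ev_diff ev_mult ev_const4 ev_V sg_def)

lemma th_Ly': "th a b (Ly' b') = [:[:fst (cc b') * fst b + snd (cc b') * snd b, fst (cc b') * snd (cc b) - snd (cc b') * fst (cc b):]:]"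
  by (simp add: Ly'_def ev_add ev_mult ev_const4 ev_V sg_def)



section \<open>Bases\<close>

lemma mm1: "[:[:u:]:] * monom (g * monom 1 q) k = monom (g * monom (u::'k::field) q) k"
proof -
  have "g * monom u q = smult u (g * monom (1::'k) q)" by (metis mult_smult_right smult_monom mult.right_neutral)
  then show ?thesis by (simp add: smult_monom)
qed

lemma mm1': "smult [:u:] (monom (g * monom 1 q) k) = monom (g * monom (u::'k::field) q) k"
  using mm1[of u g q k] by simp

lemma mm2: "[:[:c:]:] * monom (monom 1 \<beta>) \<alpha> = monom (monom (c::'k::field) \<beta>) \<alpha>"
  using mm1[of c 1] by simp

lemma mm2': "smult [:c:] (monom (monom 1 \<beta>) \<alpha>) = monom (monom (c::'k::field) \<beta>) \<alpha>"
  using mm2[of c \<beta> \<alpha>] by simp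

lemma mm3: "monom 1 \<alpha> * [:q:] = monom (q::'k::field poly) \<alpha>"
  by (simp add: monom_0[symmetric] mult_monom)

lemma GI:
  fixes f :: "nat \<times> nat \<Rightarrow> 'k::field mpoly4"
  assumes fin: "finite T"
    and ev_f: "\<And>t. t \<in> T \<Longrightarrow> ev \<sigma> (f t) = monom (G (fst t) * monom 1 (snd t)) (fst t)"
    and G0: "\<And>t. t \<in> T \<Longrightarrow> G (fst t) \<noteq> 0"
  shows "V4.independent (f ` T)" and "inj_on f T"
proof -
  have K: "u t = 0" if sum0: "(\<Sum>t\<in>T. scale4 (u t) (f t)) = 0" and tT: "t \<in> T" for u t
  proof -
    obtain k q where t: "t = (k, q)" by (cases t)
    have "ev \<sigma> (\<Sum>t\<in>T. scale4 (u t) (f t)) = 0" using sum0 by simp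
    then have S0: "(\<Sum>t\<in>T. monom (G (fst t) * monom (u t) (snd t)) (fst t)) = 0"
      by (simp add: ev_sum_scale ev_f mm1' cong: sum.cong)
    have "coeff (\<Sum>t\<in>T. monom (G (fst t) * monom (u t) (snd t)) (fst t)) k
        = (\<Sum>t\<in>T. G k * (if fst t = k then monom (u t) (snd t) else 0))"
      unfolding coeff_sum coeff_monom by (intro sum.cong refl) auto
    also have "\<dots> = G k * (\<Sum>t\<in>T. if fst t = k then monom (u t) (snd t) else 0)"
      by (simp add: sum_distrib_left)
    finally have "G k * (\<Sum>t\<in>T. if fst t = k then monom (u t) (snd t) else 0) = 0"
      using S0 by simp
    moreover have "G k \<noteq> 0" using G0[OF tT] t by simp
    ultimately have S1: "(\<Sum>t\<in>T. if fst t = k then monom (u t) (snd t) else 0) = 0" by simp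
    have "coeff (\<Sum>t\<in>T. if fst t = k then monom (u t) (snd t) else 0) q = (\<Sum>t\<in>T. if t = (k, q) then u t else 0)"
      unfolding coeff_sum by (intro sum.cong refl) (auto simp: coeff_monom)
    also have "\<dots> = u (k, q)" using fin tT t by (simp add: sum.delta')
    finally show "u t = 0" using S1 t by simp
  qed
  show inj: "inj_on f T"
  proof (rule inj_onI)
    fix t1 t2 assume t1: "t1 \<in> T" and t2: "t2 \<in> T" and eq: "f t1 = f t2"
    define u where "u t = (if t = t1 then (1::'k) else if t = t2 then -1 else 0)" for t
    show "t1 = t2"
    proof (rule ccontr)
      assume ne: "t1 \<noteq> t2"
      have "(\<Sum>t\<in>T. scale4 (u t) (f t)) = (\<Sum>t\<in>{t1, t2}. scale4 (u t) (f t))"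
        by (rule sum.mono_neutral_right) (use fin t1 t2 in \<open>auto simp: u_def V4.scale_zero_left\<close>)
      also have "\<dots> = scale4 1 (f t1) + scale4 (-1) (f t2)" using ne by (simp add: u_def)
      also have "\<dots> = 0" using eq by (simp add: V4.scale_minus_left)
      finally have "u t1 = 0" using K t1 by blast
      then show False by (simp add: u_def)
    qed
  qed
  show "V4.independent (f ` T)"
    unfolding V4.independent_explicit_module
  proof (intro allI impI)
    fix S u v assume S: "finite S" "S \<subseteq> f ` T" and sum0: "(\<Sum>v\<in>S. scale4 (u v) v) = 0" and vS: "v \<in> S"
    define T0 where "T0 = {t \<in> T. f t \<in> S}"
    have ST0: "S = f ` T0" using S(2) by (auto simp: T0_def)
    have inj0: "inj_on f T0" using inj by (rule inj_on_subset) (auto simp: T0_def)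
    define u' where "u' t = (if t \<in> T0 then u (f t) else 0)" for t
    have "(\<Sum>t\<in>T. scale4 (u' t) (f t)) = (\<Sum>t\<in>T0. scale4 (u' t) (f t))"
      by (rule sum.mono_neutral_right) (use fin in \<open>auto simp: u'_def T0_def V4.scale_zero_left\<close>)
    also have "\<dots> = (\<Sum>t\<in>T0. scale4 (u (f t)) (f t))" by (simp add: u'_def)
    also have "\<dots> = (\<Sum>v\<in>S. scale4 (u v) v)" unfolding ST0 using inj0 by (simp add: sum.reindex)
    finally have z: "(\<Sum>t\<in>T. scale4 (u' t) (f t)) = 0" using sum0 by simp
    obtain t where t: "t \<in> T0" "v = f t" using vS ST0 by blast
    have "u' t = 0" using K[OF z] t by (auto simp: T0_def)
    then show "u v = 0" using t by (simp add: u'_def)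
  qed
qed

definition Idx :: "nat \<Rightarrow> nat \<Rightarrow> (nat \<times> nat) set" where
  "Idx i j = {..i} \<times> {..j}"

lemma Idx_finite[simp]: "finite (Idx i j)" by (simp add: Idx_def)
lemma Idx_card: "card (Idx i j) = (i+1) * (j+1)" by (simp add: Idx_def card_cartesian_product)

definition bas :: "'k::field \<times> 'k \<Rightarrow> 'k \<times> 'k \<Rightarrow> nat \<Rightarrow> nat \<Rightarrow> nat \<times> nat \<Rightarrow> 'k mpoly4" where
  "bas a b i j t = Lx a ^ fst t * Lx' a ^ (i - fst t) * Ly b ^ snd t * Ly' b ^ (j - snd t)"

lemma bas_bihom: assumes "t \<in> Idx i j" shows "bas a b i j t \<in> bihom i j"
proof -
  have 1: "Lx a ^ fst t \<in> bihom (fst t) 0" using bihom_power[OF bihom_Lx, of a "fst t"] by simp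
  have 2: "Lx' a ^ (i - fst t) \<in> bihom (i - fst t) 0" using bihom_power[OF bihom_Lx', of a "i - fst t"] by simp
  have 3: "Ly b ^ snd t \<in> bihom 0 (snd t)" using bihom_power[OF bihom_Ly, of b "snd t"] by simp
  have 4: "Ly' b ^ (j - snd t) \<in> bihom 0 (j - snd t)" using bihom_power[OF bihom_Ly', of b "j - snd t"] by simp
  have "bas a b i j t \<in> bihom (fst t + (i - fst t) + 0 + 0) (0 + 0 + snd t + (j - snd t))"
    unfolding bas_def by (intro bihom_mult 1 2 3 4)
  moreover have "fst t + (i - fst t) + 0 + 0 = i" "0 + 0 + snd t + (j - snd t) = j"
    using assms by (auto simp: Idx_def)
  ultimately show ?thesis by simp
qed

lemma th_Ly_self: "b \<noteq> (0,0) \<Longrightarrow> th a b (Ly b) = Yv"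
  using cc_det[of b] by (simp add: th_Ly Yv_def mult.commute)

lemma th_Ly'_self: "b \<noteq> (0,0) \<Longrightarrow> th a b (Ly' b) = 1"
  using cc_det[of b] by (simp add: th_Ly' one_pCons mult.commute add.commute)

lemma th_bas:
  assumes "a \<noteq> (0,0)" "b \<noteq> (0,0)"
  shows "th a b (bas a b i j t) = monom (monom 1 (snd t)) (fst t)"
  using assms by (simp add: bas_def ev_mult ev_power th_Lx th_Lx' th_Ly_self th_Ly'_self Xv_pow Yv_pow mm3 smult_monom)

lemma bas_indep:
  assumes "a \<noteq> (0,0)" "b \<noteq> (0,0)"
  shows "V4.independent (bas a b i j ` Idx i j)" "inj_on (bas a b i j) (Idx i j)"
  by (rule GI[where \<sigma> = "sg a b" and G = "\<lambda>_. 1"], simp, simp add: th_bas assms, simp)+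



lemma V_pow: "V n ^ p = (Poly_Mapping.single (Poly_Mapping.single n p) 1 :: 'k::comm_ring_1 mpoly4)"
proof (induction p)
  case 0 then show ?case by simp
next
  case (Suc p)
  have "V n ^ Suc p = Poly_Mapping.single (Poly_Mapping.single n p) 1 * (Poly_Mapping.single (Poly_Mapping.single n 1) (1::'k))"
    using Suc by (simp add: V_def mult.commute)
  also have "\<dots> = Poly_Mapping.single (Poly_Mapping.single n (Suc p)) 1"
    by (simp add: mult_single single_add[symmetric])
  finally show ?case .
qed

lemma cc01: "cc (0, 1::'k::field) = (0, 1)" by (simp add: cc_def)

lemma std_bas: "bas (0, 1::'k::field) (0, 1) i j t = V 0 ^ fst t * V 1 ^ (i - fst t) * V 2 ^ snd t * V 3 ^ (j - snd t)"
  by (simp add: bas_def Lx_def Lx'_def Ly_def Ly'_def cc01)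

lemma mono_std:
  assumes F: "F \<in> bihom i j" and e: "e \<in> Poly_Mapping.keys F"
  shows "(Poly_Mapping.lookup e 0, Poly_Mapping.lookup e 2) \<in> Idx i j"
    and "Poly_Mapping.single e (1::'k::field) = bas (0, 1) (0, 1) i j (Poly_Mapping.lookup e 0, Poly_Mapping.lookup e 2)"
proof -
  have ke: "Poly_Mapping.keys e \<subseteq> {0,1,2,3}" and s1: "Poly_Mapping.lookup e 0 + Poly_Mapping.lookup e 1 = i"
    and s2: "Poly_Mapping.lookup e 2 + Poly_Mapping.lookup e 3 = j"
    using F e unfolding bihom_def by blast+
  show "(Poly_Mapping.lookup e 0, Poly_Mapping.lookup e 2) \<in> Idx i j"
    using s1 s2 by (auto simp: Idx_def)
  have i1: "i - Poly_Mapping.lookup e 0 = Poly_Mapping.lookup e 1" using s1 by simp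
  have j1: "j - Poly_Mapping.lookup e 2 = Poly_Mapping.lookup e 3" using s2 by simp
  have eq: "e = Poly_Mapping.single 0 (Poly_Mapping.lookup e 0) + Poly_Mapping.single 1 (Poly_Mapping.lookup e 1)
      + Poly_Mapping.single 2 (Poly_Mapping.lookup e 2) + Poly_Mapping.single 3 (Poly_Mapping.lookup e 3)"
  proof (rule poly_mapping_eqI)
    fix n
    show "Poly_Mapping.lookup e n = Poly_Mapping.lookup (Poly_Mapping.single 0 (Poly_Mapping.lookup e 0) + Poly_Mapping.single 1 (Poly_Mapping.lookup e 1)
      + Poly_Mapping.single 2 (Poly_Mapping.lookup e 2) + Poly_Mapping.single 3 (Poly_Mapping.lookup e 3)) n"
    proof (cases "n \<in> {0,1,2,3}")
      case True then show ?thesis by (auto simp: lookup_add lookup_single when_def)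
    next
      case False
      then have "Poly_Mapping.lookup e n = 0" using ke by (auto simp: in_keys_iff)
      then show ?thesis using False by (auto simp: lookup_add lookup_single when_def)
    qed
  qed
  show "Poly_Mapping.single e (1::'k) = bas (0, 1) (0, 1) i j (Poly_Mapping.lookup e 0, Poly_Mapping.lookup e 2)"
    unfolding std_bas fst_conv snd_conv i1 j1 V_pow mult_single
    by (subst eq) simp
qed

lemma bihom_std_span: "bihom i j \<subseteq> V4.span (bas (0, 1::'k::field) (0, 1) i j ` Idx i j)"
proof
  fix F :: "'k mpoly4" assume F: "F \<in> bihom i j"
  have "F = (\<Sum>e\<in>Poly_Mapping.keys F. scale4 (Poly_Mapping.lookup F e) (Poly_Mapping.single e 1))"
    by (subst mpoly_expand) (simp add: scale4_def const4_def mult_single)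
  also have "\<dots> \<in> V4.span (bas (0, 1) (0, 1) i j ` Idx i j)"
  proof (intro V4.span_sum V4.span_scale V4.span_base)
    fix e assume "e \<in> Poly_Mapping.keys F"
    then show "Poly_Mapping.single e 1 \<in> bas (0, 1) (0, 1) i j ` Idx i j"
      using mono_std[OF F] by blast
  qed
  finally show "F \<in> V4.span (bas (0, 1) (0, 1) i j ` Idx i j)" .
qed

lemma dim_bihom: "V4.dim (bihom i j :: 'k::field mpoly4 set) = (i+1)*(j+1)"
proof -
  have nz: "(0, 1::'k) \<noteq> (0,0)" by simp
  show ?thesis
    by (rule V4.dim_unique[OF _ bihom_std_span bas_indep(1)[OF nz nz]])
       (auto simp: bas_bihom card_image[OF bas_indep(2)[OF nz nz]] Idx_card)
qed

lemma bihom_span: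
  fixes a b :: "'k::field \<times> 'k"
  assumes a: "a \<noteq> (0,0)" and b: "b \<noteq> (0,0)"
  shows "bihom i j \<subseteq> V4.span (bas a b i j ` Idx i j)"
proof
  fix x :: "'k mpoly4" assume x: "x \<in> bihom i j"
  let ?B = "bas a b i j ` Idx i j"
  let ?S = "bas (0, 1::'k) (0, 1) i j ` Idx i j"
  show "x \<in> V4.span ?B"
  proof (rule ccontr)
    assume nx: "x \<notin> V4.span ?B"
    have ind: "V4.independent (insert x ?B)"
      by (rule V4.independent_insertI[OF nx bas_indep(1)[OF a b]])
    have sub: "insert x ?B \<subseteq> V4.span ?S"
      using x bihom_std_span[of i j] bas_bihom[of _ i j a b] by blast
    have "card (insert x ?B) \<le> card ?S"
      using V4.independent_span_bound[OF _ ind sub] by simp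
    also have "\<dots> \<le> card (Idx i j)" by (rule card_image_le) simp
    also have "\<dots> = card ?B" using card_image[OF bas_indep(2)[OF a b]] by simp
    finally have "card (insert x ?B) \<le> card ?B" .
    moreover have "x \<notin> ?B" using nx V4.span_base by blast
    ultimately show False by simp
  qed
qed

lemma bihom_coords:
  assumes a: "a \<noteq> (0,0)" and b: "b \<noteq> (0,0)" and F: "F \<in> bihom i j"
  obtains c where "F = (\<Sum>t\<in>Idx i j. scale4 (c t) (bas a b i j t))"
proof -
  have "F \<in> V4.span (bas a b i j ` Idx i j)" using bihom_span[OF a b] F by blast
  then obtain u where "F = (\<Sum>v\<in>bas a b i j ` Idx i j. scale4 (u v) v)"
    unfolding V4.span_finite[OF finite_imageI[OF Idx_finite]] by blast
  also have "\<dots> = (\<Sum>t\<in>Idx i j. scale4 (u (bas a b i j t)) (bas a b i j t))"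
    by (rule sum.reindex[OF bas_indep(2)[OF a b], unfolded comp_def])
  finally show ?thesis by (rule that[of "\<lambda>t. u (bas a b i j t)"])
qed

lemma th_coords:
  assumes a: "a \<noteq> (0,0)" and b: "b \<noteq> (0,0)" and F: "F = (\<Sum>t\<in>Idx i j. scale4 (c t) (bas a b i j t))"
  shows "th a b F = (\<Sum>t\<in>Idx i j. monom (monom (c t) (snd t)) (fst t))"
  unfolding F ev_sum_scale using a b by (simp add: th_bas mm2')

lemma th_coeff:
  assumes a: "a \<noteq> (0,0)" and b: "b \<noteq> (0,0)" and F: "F = (\<Sum>t\<in>Idx i j. scale4 (c t) (bas a b i j t))"
    and t: "(\<alpha>, \<beta>) \<in> Idx i j"
  shows "c (\<alpha>, \<beta>) = coeff (coeff (th a b F) \<alpha>) \<beta>"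
  unfolding th_coords[OF a b F] coeff_coeff_sum_monom[OF Idx_finite] using t by simp

lemma th_inj:
  assumes a: "a \<noteq> (0,0)" and b: "b \<noteq> (0,0)" and F: "F \<in> bihom i j" and z: "th a b F = 0"
  shows "F = 0"
proof -
  obtain c where Fc: "F = (\<Sum>t\<in>Idx i j. scale4 (c t) (bas a b i j t))" using bihom_coords[OF a b F] by blast
  have "\<And>t. t \<in> Idx i j \<Longrightarrow> c t = 0"
  proof -
    fix t assume t: "t \<in> Idx i j"
    obtain \<alpha> \<beta> where "t = (\<alpha>, \<beta>)" by (cases t)
    then show "c t = 0" using th_coeff[OF a b Fc, of \<alpha> \<beta>] t z by simp
  qed
  then show ?thesis unfolding Fc by (simp add: V4.scale_zero_left)
qed

lemma th_inj2:
  assumes a: "a \<noteq> (0,0)" and b: "b \<noteq> (0,0)" and F: "F \<in> bihom i j" and G: "G \<in> bihom i j"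
    and z: "th a b F = th a b G"
  shows "F = G"
  using th_inj[OF a b bihom_diff[OF F G]] z by (simp add: ev_diff)



definition mp :: "'k::field \<times> 'k \<Rightarrow> 'k poly" where
  "mp b = [:- fst b, snd b:]"

lemma mp_nz: "b \<noteq> (0,0) \<Longrightarrow> mp b \<noteq> 0"
  by (cases b) (auto simp: mp_def)

lemma degree_mp: "degree (mp b) = (if snd b = 0 then 0 else 1)"
  by (simp add: mp_def)

definition bez :: "'a::comm_ring_1 \<Rightarrow> 'a \<Rightarrow> bool" where
  "bez a b \<longleftrightarrow> (\<exists>u v. u * a + v * b = 1)"

lemma bez_sym: "bez a b \<Longrightarrow> bez b a"
  unfolding bez_def by (metis add.commute)

lemma bez_mult: "bez a c \<Longrightarrow> bez b c \<Longrightarrow> bez (a * b) c"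
proof -
  assume "bez a c" "bez b c"
  then obtain u v u' v' where 1: "u * a + v * c = 1" and 2: "u' * b + v' * c = 1" unfolding bez_def by blast
  have "(u * u') * (a * b) + (u * a * v' + v * (u' * b + v' * c)) * c = (u * a + v * c) * (u' * b + v' * c)"
    by (simp add: algebra_simps)
  also have "\<dots> = 1" using 1 2 by simp
  finally show "bez (a * b) c" unfolding bez_def by blast
qed

lemma bez_one: "bez 1 c" unfolding bez_def by (rule exI[of _ 1], rule exI[of _ 0]) simp

lemma bez_power: "bez a c \<Longrightarrow> bez (a ^ n) c"
  by (induction n) (simp_all add: bez_one bez_mult)

lemma bez_power2: "bez a c \<Longrightarrow> bez (a ^ n) (c ^ m)"
  by (intro bez_power bez_sym[OF bez_power[OF bez_sym]])

lemma bez_dvd: "a dvd p \<Longrightarrow> b dvd p \<Longrightarrow> bez a b \<Longrightarrow> a * b dvd p"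
proof -
  assume "a dvd p" "b dvd p" "bez a b"
  then obtain u v where 1: "u * a + v * b = 1" unfolding bez_def by blast
  obtain x where x: "p = a * x" using \<open>a dvd p\<close> by (elim dvdE)
  obtain y where y: "p = b * y" using \<open>b dvd p\<close> by (elim dvdE)
  have "p = (u * a + v * b) * p" using 1 by simp
  also have "\<dots> = u * a * p + v * b * p" by (simp add: algebra_simps)
  also have "u * a * p = u * a * (b * y)" by (simp only: y[symmetric])
  also have "v * b * p = v * b * (a * x)" by (simp only: x[symmetric])
  also have "u * a * (b * y) + v * b * (a * x) = (a * b) * (u * y + v * x)" by (simp add: algebra_simps)
  finally show "a * b dvd p" by (rule dvdI)
qed

lemma bez_lin: assumes k: "(\<kappa>::'k::field) = b1 * b0' - b0 * b1'" "\<kappa> \<noteq> 0"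
  shows "[:b1' / \<kappa>:] * [:-b0, b1:] + [:- b1 / \<kappa>:] * [:-b0', b1':] = 1"
proof -
  have 1: "b1' / \<kappa> * (- b0) + (- b1 / \<kappa>) * (- b0') = 1"
  proof -
    have "b1' / \<kappa> * (- b0) + (- b1 / \<kappa>) * (- b0') = (b1 * b0' - b0 * b1') / \<kappa>"
      by (simp add: diff_divide_distrib algebra_simps)
    then show ?thesis using k by simp
  qed
  have 2: "b1' / \<kappa> * b1 + (- b1 / \<kappa>) * b1' = 0" by (simp add: algebra_simps)
  show ?thesis using 1 2 by (simp add: one_pCons mult.commute)
qed

lemma mp_coprime:
  assumes "fst b * snd b' \<noteq> snd b * fst b'"
  shows "bez (mp b) (mp b')"
proof -
  define \<kappa> where "\<kappa> = snd b * fst b' - fst b * snd b'"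
  have k: "\<kappa> \<noteq> 0" using assms by (simp add: \<kappa>_def)
  have "[:snd b' / \<kappa>:] * mp b + [:- snd b / \<kappa>:] * mp b' = 1"
    unfolding mp_def by (rule bez_lin[OF \<kappa>_def k])
  then show ?thesis unfolding bez_def by blast
qed

lemma bez_prod_left:
  fixes n :: nat
  assumes "\<And>l. l < n \<Longrightarrow> bez (f l) (x :: 'a::comm_ring_1)"
  shows "bez (\<Prod>l<n. f l) x"
  using assms by (induction n) (auto simp: bez_one bez_mult)

lemma prod_dvd_coprime:
  fixes n :: nat
  assumes "\<And>l. l < n \<Longrightarrow> f l dvd (p :: 'a::comm_ring_1)"
    and "\<And>l l'. l < n \<Longrightarrow> l' < n \<Longrightarrow> l \<noteq> l' \<Longrightarrow> bez (f l) (f l')"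
  shows "(\<Prod>l<n. f l) dvd p"
  using assms
proof (induction n)
  case 0 then show ?case by simp
next
  case (Suc n)
  have "(\<Prod>l<n. f l) dvd p" using Suc by auto
  moreover have "f n dvd p" using Suc by auto
  moreover have "bez (\<Prod>l<n. f l) (f n)"
    by (rule bez_prod_left) (use Suc.prems(2) in auto)
  ultimately show ?case by (simp add: bez_dvd)
qed

lemma comb:
  fixes b :: "nat \<Rightarrow> 'k::field \<times> 'k" and e :: "nat \<Rightarrow> nat" and p :: "'k poly"
  assumes nz: "\<And>l. l < s \<Longrightarrow> b l \<noteq> (0,0)"
    and dist: "\<And>l l'. l < s \<Longrightarrow> l' < s \<Longrightarrow> l \<noteq> l' \<Longrightarrow> fst (b l) * snd (b l') \<noteq> snd (b l) * fst (b l')"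
    and dv: "\<And>l. l < s \<Longrightarrow> \<exists>r. p = mp (b l) ^ e l * r \<and> degree r \<le> j - e l"
    and big: "\<And>l. l < s \<Longrightarrow> e l > j \<Longrightarrow> p = 0"
    and dp: "degree p \<le> j"
    and pnz: "p \<noteq> 0"
  shows "\<exists>r. p = (\<Prod>l<s. mp (b l) ^ e l) * r \<and> degree r + (\<Sum>l<s. e l) \<le> j"
proof -
  let ?G = "\<Prod>l<s. mp (b l) ^ e l"
  have "?G dvd p"
  proof (rule prod_dvd_coprime)
    fix l assume "l < s"
    then show "mp (b l) ^ e l dvd p" using dv[of l] by (auto intro: dvdI)
  next
    fix l l' assume ll: "l < s" "l' < s" "l \<noteq> l'"
    show "bez (mp (b l) ^ e l) (mp (b l') ^ e l')"
      using bez_power2[OF mp_coprime[OF dist[OF ll]]] by simp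
  qed
  then obtain r where pr: "p = ?G * r" by (elim dvdE)
  have "\<forall>l<s. mp (b l) \<noteq> 0" using nz mp_nz by blast
  then have Gnz: "?G \<noteq> 0" by (simp add: prod_zero_iff)
  have rnz: "r \<noteq> 0" using pnz pr by auto
  have "degree ?G = (\<Sum>l<s. degree (mp (b l) ^ e l))"
  proof (rule degree_prod_sum_eq)
    fix l assume "l \<in> {..<s}"
    then show "mp (b l) ^ e l \<noteq> 0" using mp_nz[OF nz[of l]] by simp
  qed
  also have "\<dots> = (\<Sum>l<s. e l * degree (mp (b l)))"
  proof (rule sum.cong[OF refl])
    fix l assume "l \<in> {..<s}"
    then show "degree (mp (b l) ^ e l) = e l * degree (mp (b l))"
      using mp_nz[OF nz[of l]] by (simp add: degree_power_eq)
  qed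
  finally have dG: "degree ?G = (\<Sum>l<s. e l * degree (mp (b l)))" .
  have dpG: "degree p = degree ?G + degree r"
    using pr Gnz rnz by (simp add: degree_mult_eq)
  define \<delta> where "\<delta> = (\<Sum>l<s. e l * (1 - degree (mp (b l))))"
  have sum_e: "(\<Sum>l<s. e l) = degree ?G + \<delta>"
    unfolding dG \<delta>_def sum.distrib[symmetric] by (rule sum.cong) (auto simp: degree_mp)
  have key: "degree p + \<delta> \<le> j"
  proof (cases "\<exists>l0<s. snd (b l0) = 0")
    case False
    then have "\<delta> = 0" unfolding \<delta>_def by (auto simp: degree_mp intro!: sum.neutral)
    then show ?thesis using dp by simp
  next
    case True
    then obtain l0 where l0: "l0 < s" "snd (b l0) = 0" by blast
    have uniq: "l = l0" if "l < s" "snd (b l) = 0" for l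
    proof (rule ccontr)
      assume "l \<noteq> l0"
      then show False using dist[OF that(1) l0(1)] that(2) l0(2) by simp
    qed
    have "\<delta> = (\<Sum>l\<in>{l0}. e l * (1 - degree (mp (b l))))"
      unfolding \<delta>_def
    proof (rule sum.mono_neutral_right)
      show "finite {..<s}" by simp
      show "{l0} \<subseteq> {..<s}" using l0 by simp
      show "\<forall>l\<in>{..<s} - {l0}. e l * (1 - degree (mp (b l))) = 0"
      proof
        fix l assume l: "l \<in> {..<s} - {l0}"
        then have "snd (b l) \<noteq> 0" using uniq by blast
        then show "e l * (1 - degree (mp (b l))) = 0" by (simp add: degree_mp)
      qed
    qed
    also have "\<dots> = e l0" using l0 by (simp add: degree_mp)
    finally have d: "\<delta> = e l0" .
    obtain r0 where r0: "p = mp (b l0) ^ e l0 * r0" "degree r0 \<le> j - e l0" using dv[OF l0(1)] by blast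
    have "e l0 \<le> j" using big[OF l0(1)] pnz by (meson not_le)
    moreover have "degree p = degree r0"
    proof -
      have m0: "mp (b l0) ^ e l0 \<noteq> 0" using mp_nz[OF nz[OF l0(1)]] by simp
      have r00: "r0 \<noteq> 0" using r0(1) pnz by auto
      have "degree (mp (b l0) ^ e l0) = 0"
        using mp_nz[OF nz[OF l0(1)]] l0(2) by (simp add: degree_power_eq degree_mp)
      then show ?thesis unfolding r0(1) using degree_mult_eq[OF m0 r00] by simp
    qed
    ultimately show ?thesis using d r0(2) by simp
  qed
  show ?thesis
  proof (intro exI conjI)
    show "p = ?G * r" by (rule pr)
    show "degree r + (\<Sum>l<s. e l) \<le> j" using key dpG sum_e by linarith
  qed
qed



lemma R4_Lx': "Lx' a \<in> R4" using bihom_Lx' bihom_R4 by blast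
lemma Xv_J': "Xv \<in> Jm (Suc 0)" using Xv_J by simp
lemma Yv_J': "Yv \<in> Jm (Suc 0)" using Yv_J by simp

lemma prod_pconst: "(\<Prod>x\<in>A. [:f x:]) = [:\<Prod>x\<in>A. f x:]"
  by (induction A rule: infinite_finite_induct) (simp_all add: one_pCons mult.commute)

lemma prod_list_in_pow:
  assumes "set fs \<subseteq> I0" "I0 \<subseteq> R4" "m \<le> length fs"
  shows "prod_list fs \<in> ideal_pow I0 m"
proof -
  have "prod_list fs = prod_list (drop m fs) * prod_list (take m fs)"
    by (metis append_take_drop_id mult.commute prod_list.append)
  moreover have "length (take m fs) = m" "set (take m fs) \<subseteq> I0"
    using assms by (auto dest: in_set_takeD)
  then have "prod_list (take m fs) \<in> {prod_list fs |fs. length fs = m \<and> set fs \<subseteq> I0}"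
    by blast
  then have "prod_list (take m fs) \<in> ideal_pow I0 m"
    unfolding ideal_pow_def by (rule ideal_gen_base)
  moreover have "prod_list (drop m fs) \<in> R4"
    using assms by (intro R4_prod_list) (auto dest: in_set_dropD)
  ultimately show ?thesis unfolding ideal_pow_def by (simp add: ideal_gen_mult)
qed

lemma pow_mem:
  assumes "x \<in> I0" "y \<in> I0" "I0 \<subseteq> R4" "m \<le> k + e"
  shows "x ^ k * y ^ e \<in> ideal_pow I0 m"
proof -
  have "x ^ k * y ^ e = prod_list (replicate k x @ replicate e y)" by simp
  also have "\<dots> \<in> ideal_pow I0 m" by (rule prod_list_in_pow) (use assms in auto)
  finally show ?thesis .
qed

lemma th_ideal_pow:
  assumes a: "a \<noteq> (0,0)" and b: "b \<noteq> (0,0)" and F: "F \<in> ideal_pow (pt_ideal (a, b)) m"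
  shows "th a b F \<in> Jm m"
proof -
  have pt1: "th a b f \<in> Jm 1" if "f \<in> pt_ideal (a, b)" for f
    using that unfolding pt_ideal_eq
    by (rule ideal_gen_image) (use a b in \<open>auto simp: J_0 J_add J_multL th_Lx th_Ly_self Xv_J' Yv_J'\<close>)
  show ?thesis
    using F unfolding ideal_pow_def
  proof (rule ideal_gen_image)
    show "0 \<in> Jm m" by (rule J_0)
    show "\<And>x y. x \<in> Jm m \<Longrightarrow> y \<in> Jm m \<Longrightarrow> x + y \<in> Jm m" by (rule J_add)
    show "\<And>x y. y \<in> Jm m \<Longrightarrow> x * y \<in> Jm m" by (rule J_multL)
    fix t assume "t \<in> {prod_list fs |fs. length fs = m \<and> set fs \<subseteq> pt_ideal (a, b)}"
    then obtain fs where fs: "t = prod_list fs" "length fs = m" "set fs \<subseteq> pt_ideal (a, b)" by blast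
    have "prod_list (map (th a b) fs) \<in> Jm (length (map (th a b) fs))"
      by (rule J_prod_list) (use fs pt1 in auto)
    then show "th a b t \<in> Jm m" using fs by (simp add: ev_prod_list)
  qed
qed


lemma pt_ideal_R4:
  fixes a b :: "'k::field \<times> 'k"
  shows "pt_ideal (a, b) \<subseteq> R4"
  unfolding pt_ideal_eq by (rule ideal_gen_R4) (auto simp: R4_Lx R4_Ly)

locale pts =
  fixes R1 :: "'k::field \<times> 'k" and Q :: "nat \<Rightarrow> 'k \<times> 'k" and mult :: "nat \<Rightarrow> nat" and s :: nat
  assumes R1nz: "R1 \<noteq> (0,0)" and Qnz: "\<And>l. l < s \<Longrightarrow> Q l \<noteq> (0,0)"
    and Qdist: "\<And>l l'. l < s \<Longrightarrow> l' < s \<Longrightarrow> l \<noteq> l' \<Longrightarrow> fst (Q l) * snd (Q l') \<noteq> snd (Q l) * fst (Q l')"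

context pts
begin

definition "aa k = (\<Sum>l<s. mult l - k)"
definition "Gm k = (\<Prod>l<s. Ly (Q l) ^ (mult l - k))"
definition "Gp k = (\<Prod>l<s. mp (Q l) ^ (mult l - k))"
definition "Bs i j t = Lx R1 ^ fst t * Lx' R1 ^ (i - fst t) * Gm (fst t) * V 2 ^ snd t * V 3 ^ (j - aa (fst t) - snd t)"
definition "Kset i j = {k. k \<le> i \<and> aa k \<le> j}"
definition "Tset i j = Sigma (Kset i j) (\<lambda>k. {..j - aa k})"

abbreviation "Om \<equiv> th R1 (0, 1)"

lemma Om_Ly: "Om (Ly b) = [:mp b:]"
  by (simp add: th_Ly cc01 mp_def)

lemma Om_Ly': "Om (Ly' b) = [:[:snd (cc b), fst (cc b):]:]"
  by (simp add: th_Ly' cc01)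

lemma Om_V2: "Om (V 2) = Yv" by (simp add: ev_V sg_def cc01 Yv_def)
lemma Om_V3: "Om (V 3) = 1" by (simp add: ev_V sg_def cc01 one_pCons)

lemma Om_Gm: "Om (Gm k) = [:Gp k:]"
  by (simp add: Gm_def Gp_def ev_prod ev_power Om_Ly poly_const_pow prod_pconst)

lemma Om_Bs: "Om (Bs i j t) = monom (Gp (fst t) * monom 1 (snd t)) (fst t)"
proof -
  have "Om (Bs i j t) = monom 1 (fst t) * [:Gp (fst t):] * [:monom 1 (snd t):]"
    using R1nz by (simp add: Bs_def ev_mult ev_power th_Lx th_Lx' Om_Gm Om_V2 Om_V3 Xv_pow Yv_pow)
  also have "\<dots> = monom (Gp (fst t) * monom 1 (snd t)) (fst t)"
    by (simp add: mm3 monom_0[symmetric] mult_monom)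
  finally show ?thesis .
qed

lemma Gp_nz: "Gp k \<noteq> 0"
proof -
  have "\<forall>l<s. mp (Q l) \<noteq> 0" using Qnz mp_nz by blast
  then show ?thesis unfolding Gp_def by (simp add: prod_zero_iff)
qed

lemma Gm_bihom: "Gm k \<in> bihom 0 (aa k)"
  unfolding Gm_def aa_def
proof (rule bihom_prod)
  fix l show "Ly (Q l) ^ (mult l - k) \<in> bihom 0 (mult l - k)"
    using bihom_power[OF bihom_Ly, of "Q l" "mult l - k"] by simp
qed

lemma Bs_bihom: assumes t: "t \<in> Tset i j" shows "Bs i j t \<in> bihom i j"
proof -
  obtain k q where kq: "t = (k, q)" by (cases t)
  have k: "k \<le> i" "aa k \<le> j" and q: "q \<le> j - aa k" using t kq by (auto simp: Tset_def Kset_def)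
  have 1: "Lx R1 ^ k \<in> bihom k 0" using bihom_power[OF bihom_Lx, of R1 k] by simp
  have 2: "Lx' R1 ^ (i - k) \<in> bihom (i - k) 0" using bihom_power[OF bihom_Lx', of R1 "i - k"] by simp
  have 3: "V 2 ^ q \<in> bihom 0 q" using bihom_power[OF bihom_V2, of q] by simp
  have 4: "V 3 ^ (j - aa k - q) \<in> bihom 0 (j - aa k - q)" using bihom_power[OF bihom_V3, of "j - aa k - q"] by simp
  have "Bs i j t \<in> bihom (k + (i - k) + 0 + 0 + 0) (0 + 0 + aa k + q + (j - aa k - q))"
    unfolding Bs_def kq fst_conv snd_conv by (intro bihom_mult 1 2 3 4 Gm_bihom)
  moreover have "k + (i - k) + 0 + 0 + 0 = i" "0 + 0 + aa k + q + (j - aa k - q) = j" using k q by auto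
  ultimately show ?thesis by simp
qed

lemma Bs_pow:
  assumes t: "t \<in> Tset i j" and l: "l < s"
  shows "Bs i j t \<in> ideal_pow (pt_ideal (R1, Q l)) (mult l)"
proof -
  obtain k q where kq: "t = (k, q)" by (cases t)
  define P' where "P' = (\<Prod>l'\<in>{..<s} - {l}. Ly (Q l') ^ (mult l' - k))"
  have Gm: "Gm k = Ly (Q l) ^ (mult l - k) * P'"
    unfolding Gm_def P'_def using l by (simp add: prod.remove)
  define rest where "rest = Lx' R1 ^ (i - k) * P' * V 2 ^ q * V 3 ^ (j - aa k - q)"
  have eq: "Bs i j t = rest * (Lx R1 ^ k * Ly (Q l) ^ (mult l - k))"
    unfolding Bs_def kq fst_conv snd_conv Gm rest_def by (simp add: mult_ac)
  have R: "rest \<in> R4"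
    unfolding rest_def P'_def
    by (intro R4_mult R4_power R4_prod R4_V R4_Ly R4_Lx') simp_all
  have "Lx R1 ^ k * Ly (Q l) ^ (mult l - k) \<in> ideal_pow (pt_ideal (R1, Q l)) (mult l)"
    by (rule pow_mem) (auto simp: pt_ideal_eq[of R1 "Q l"] ideal_gen_base pt_ideal_R4[of R1 "Q l", unfolded pt_ideal_eq])
  then show ?thesis unfolding eq ideal_pow_def using R by (rule ideal_gen_mult)
qed

definition "II = fat_ideal s (\<lambda>l. (R1, Q l)) mult"

lemma Bs_II: assumes t: "t \<in> Tset i j" shows "Bs i j t \<in> II"
  unfolding II_def fat_ideal_def
  using Bs_pow[OF t] Bs_bihom[OF t] bihom_R4 by blast

lemma Tset_finite: "finite (Tset i j)"
proof -
  have "Kset i j \<subseteq> {..i}" by (auto simp: Kset_def)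
  then have "finite (Kset i j)" by (rule finite_subset) simp
  then show ?thesis unfolding Tset_def by simp
qed

lemma Bs_indep: "V4.independent (Bs i j ` Tset i j)" "inj_on (Bs i j) (Tset i j)"
  by (rule GI[where \<sigma> = "sg R1 (0,1)" and G = Gp], rule Tset_finite, simp add: Om_Bs, simp add: Gp_nz)+

end



definition mq :: "'k::field \<times> 'k \<Rightarrow> 'k poly" where
  "mq b = [:snd (cc b), fst (cc b):]"

lemma degree_mp_le: "degree (mp b) \<le> 1" by (simp add: mp_def)
lemma degree_mq_le: "degree (mq b) \<le> 1" by (simp add: mq_def)

lemma sum_Idx_coeff:
  "(\<Sum>t\<in>Idx i j. if fst t = k then g t else 0) = (if k \<le> i then (\<Sum>\<beta>\<le>j. g (k, \<beta>)) else 0)"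
proof -
  have "(\<Sum>t\<in>Idx i j. if fst t = k then g t else 0) = (\<Sum>\<alpha>\<le>i. \<Sum>\<beta>\<le>j. if \<alpha> = k then g (\<alpha>, \<beta>) else 0)"
    unfolding Idx_def sum.cartesian_product by (intro sum.cong refl) auto
  also have "\<dots> = (\<Sum>\<beta>\<le>j. \<Sum>\<alpha>\<le>i. if \<alpha> = k then g (\<alpha>, \<beta>) else 0)"
    by (rule sum.swap)
  also have "\<dots> = (\<Sum>\<beta>\<le>j. if k \<le> i then g (k, \<beta>) else 0)"
    by (simp add: sum.delta)
  also have "\<dots> = (if k \<le> i then (\<Sum>\<beta>\<le>j. g (k, \<beta>)) else 0)"
    by simp
  finally show ?thesis .
qed

context pts
begin

lemma Om_bas:
  "Om (bas R1 b i j t) = monom (mp b ^ snd t * mq b ^ (j - snd t)) (fst t)"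
proof -
  have "Om (bas R1 b i j t) = monom 1 (fst t) * [:mp b ^ snd t:] * [:mq b ^ (j - snd t):]"
    using R1nz by (simp add: bas_def ev_mult ev_power th_Lx th_Lx' Om_Ly Om_Ly' Xv_pow poly_const_pow mq_def)
  also have "\<dots> = monom (mp b ^ snd t * mq b ^ (j - snd t)) (fst t)"
    by (simp add: monom_0[symmetric] mult_monom)
  finally show ?thesis .
qed

lemma shape:
  assumes F: "F \<in> bihom i j"
  shows "k > i \<Longrightarrow> coeff (Om F) k = 0" and "degree (coeff (Om F) k) \<le> j"
proof -
  have nz: "(0, 1::'k) \<noteq> (0, 0)" by simp
  obtain c where Fc: "F = (\<Sum>t\<in>Idx i j. scale4 (c t) (bas R1 (0,1) i j t))"
    using bihom_coords[OF R1nz nz F] by blast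
  have co: "coeff (Om F) k = (if k \<le> i then (\<Sum>\<beta>\<le>j. monom (c (k, \<beta>)) \<beta>) else 0)"
    unfolding th_coords[OF R1nz nz Fc] coeff_sum coeff_monom
    using sum_Idx_coeff[where g = "\<lambda>t. monom (c t) (snd t)" and i = i and j = j and k = k] by simp
  show "k > i \<Longrightarrow> coeff (Om F) k = 0" using co by simp
  show "degree (coeff (Om F) k) \<le> j"
    unfolding co by (auto intro!: degree_sum_le simp: degree_monom_le order_trans[OF degree_monom_le])
qed

lemma local_div:
  assumes F: "F \<in> II" "F \<in> bihom i j" and l: "l < s" and k: "k \<le> i"
  shows "\<exists>r. coeff (Om F) k = mp (Q l) ^ (mult l - k) * r \<and> degree r \<le> j - (mult l - k)"
    and "mult l - k > j \<Longrightarrow> coeff (Om F) k = 0"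
proof -
  define e where "e = mult l - k"
  have Ql: "Q l \<noteq> (0,0)" using Qnz[OF l] .
  obtain c where Fc: "F = (\<Sum>t\<in>Idx i j. scale4 (c t) (bas R1 (Q l) i j t))"
    using bihom_coords[OF R1nz Ql F(2)] by blast
  have Fpow: "F \<in> ideal_pow (pt_ideal (R1, Q l)) (mult l)"
    using F(1) l unfolding II_def fat_ideal_def by blast
  have J: "th R1 (Q l) F \<in> Jm (mult l)" by (rule th_ideal_pow[OF R1nz Ql Fpow])
  have c0: "c (k, \<beta>) = 0" if "\<beta> \<le> j" "\<beta> < e" for \<beta>
  proof -
    have "(k, \<beta>) \<in> Idx i j" using that k by (simp add: Idx_def)
    then have "c (k, \<beta>) = coeff (coeff (th R1 (Q l) F) k) \<beta>" by (rule th_coeff[OF R1nz Ql Fc])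
    also have "\<dots> = 0" using J that unfolding Jm_def e_def by auto
    finally show ?thesis .
  qed
  define W where "W \<beta> = mp (Q l) ^ \<beta> * mq (Q l) ^ (j - \<beta>)" for \<beta>
  have OmF: "Om F = (\<Sum>t\<in>Idx i j. monom (smult (c t) (W (snd t))) (fst t))"
    unfolding Fc ev_sum_scale Om_bas W_def by (simp add: smult_monom)
  have co: "coeff (Om F) k = (\<Sum>\<beta>\<le>j. smult (c (k, \<beta>)) (W \<beta>))"
    unfolding OmF coeff_sum coeff_monom using k
      sum_Idx_coeff[where g = "\<lambda>t. smult (c t) (W (snd t))" and i = i and j = j and k = k] by simp
  define r where "r = (\<Sum>\<beta>\<le>j. if e \<le> \<beta> then smult (c (k, \<beta>)) (mp (Q l) ^ (\<beta> - e) * mq (Q l) ^ (j - \<beta>)) else 0)"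
  have eq: "coeff (Om F) k = mp (Q l) ^ e * r"
    unfolding co r_def sum_distrib_left
  proof (rule sum.cong[OF refl])
    fix \<beta> assume b: "\<beta> \<in> {..j}"
    show "smult (c (k, \<beta>)) (W \<beta>) = mp (Q l) ^ e * (if e \<le> \<beta> then smult (c (k, \<beta>)) (mp (Q l) ^ (\<beta> - e) * mq (Q l) ^ (j - \<beta>)) else 0)"
    proof (cases "e \<le> \<beta>")
      case True
      then have "mp (Q l) ^ \<beta> = mp (Q l) ^ e * mp (Q l) ^ (\<beta> - e)"
        by (simp add: power_add[symmetric])
      then show ?thesis using True by (simp add: W_def mult_ac)
    next
      case False then show ?thesis using c0 b by simp
    qed
  qed
  have dr: "degree r \<le> j - e"
    unfolding r_def
  proof (rule degree_sum_le)
    fix \<beta> assume b: "\<beta> \<in> {..j}"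
    show "degree (if e \<le> \<beta> then smult (c (k, \<beta>)) (mp (Q l) ^ (\<beta> - e) * mq (Q l) ^ (j - \<beta>)) else 0) \<le> j - e"
    proof (cases "e \<le> \<beta>")
      case True
      have "degree (smult (c (k, \<beta>)) (mp (Q l) ^ (\<beta> - e) * mq (Q l) ^ (j - \<beta>)))
          \<le> degree (mp (Q l) ^ (\<beta> - e)) + degree (mq (Q l) ^ (j - \<beta>))"
        by (rule order_trans[OF degree_smult_le degree_mult_le])
      also have "\<dots> \<le> degree (mp (Q l)) * (\<beta> - e) + degree (mq (Q l)) * (j - \<beta>)"
        by (intro add_mono degree_power_le)
      also have "\<dots> \<le> 1 * (\<beta> - e) + 1 * (j - \<beta>)"
        by (intro add_mono mult_right_mono degree_mp_le degree_mq_le) simp_all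
      also have "\<dots> = j - e" using True b by simp
      finally show ?thesis using True by simp
    qed simp
  qed simp
  show "\<exists>r. coeff (Om F) k = mp (Q l) ^ (mult l - k) * r \<and> degree r \<le> j - (mult l - k)"
    using eq dr unfolding e_def by blast
  show "mult l - k > j \<Longrightarrow> coeff (Om F) k = 0"
  proof -
    assume "mult l - k > j"
    then have "r = 0" unfolding r_def e_def by (intro sum.neutral) auto
    then show ?thesis using eq by simp
  qed
qed

end



context pts
begin

lemma Kset_finite: "finite (Kset i j)"
proof -
  have "Kset i j \<subseteq> {..i}" by (auto simp: Kset_def)
  then show ?thesis by (rule finite_subset) simp
qed

lemma II_span: "II \<inter> bihom i j \<subseteq> V4.span (Bs i j ` Tset i j)"
proof
  fix F assume "F \<in> II \<inter> bihom i j"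
  then have FI: "F \<in> II" and FB: "F \<in> bihom i j" by auto
  define p where "p k = coeff (Om F) k" for k
  have pk: "\<exists>r. p k = Gp k * r \<and> degree r + aa k \<le> j" if k: "k \<le> i" and pnz: "p k \<noteq> 0" for k
  proof -
    have "\<exists>r. p k = (\<Prod>l<s. mp (Q l) ^ (mult l - k)) * r \<and> degree r + (\<Sum>l<s. mult l - k) \<le> j"
    proof (rule comb[where b = Q and e = "\<lambda>l. mult l - k"])
      show "\<And>l. l < s \<Longrightarrow> Q l \<noteq> (0,0)" by (rule Qnz)
      show "\<And>l l'. l < s \<Longrightarrow> l' < s \<Longrightarrow> l \<noteq> l' \<Longrightarrow> fst (Q l) * snd (Q l') \<noteq> snd (Q l) * fst (Q l')"
        by (rule Qdist)
      show "\<And>l. l < s \<Longrightarrow> \<exists>r. p k = mp (Q l) ^ (mult l - k) * r \<and> degree r \<le> j - (mult l - k)"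
        unfolding p_def by (rule local_div(1)[OF FI FB _ k])
      show "\<And>l. l < s \<Longrightarrow> mult l - k > j \<Longrightarrow> p k = 0"
        unfolding p_def by (rule local_div(2)[OF FI FB _ k])
      show "degree (p k) \<le> j" unfolding p_def by (rule shape(2)[OF FB])
      show "p k \<noteq> 0" by (rule pnz)
    qed
    then show ?thesis by (simp add: Gp_def aa_def)
  qed
  define rr where "rr k = (if k \<le> i \<and> p k \<noteq> 0 then (SOME r. p k = Gp k * r \<and> degree r + aa k \<le> j) else 0)" for k
  have rr12: "p k = Gp k * rr k \<and> degree (rr k) \<le> j - aa k" if k: "k \<le> i" for k
  proof (cases "p k = 0")
    case True then show ?thesis by (simp add: rr_def)
  next
    case False
    have "p k = Gp k * rr k \<and> degree (rr k) + aa k \<le> j"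
      unfolding rr_def using False k someI_ex[OF pk[OF k False]] by simp
    then show ?thesis by linarith
  qed
  have rr2: "degree (rr k) \<le> j - aa k" for k
    using rr12[of k] by (cases "k \<le> i") (auto simp: rr_def)
  have rr3: "p k = 0" if k: "k \<le> i" and nk: "k \<notin> Kset i j" for k
  proof (rule ccontr)
    assume pn: "p k \<noteq> 0"
    obtain r :: "'k poly" where "degree r + aa k \<le> j" using pk[OF k pn] by blast
    then have "k \<in> Kset i j" using k by (simp add: Kset_def)
    then show False using nk by simp
  qed
  have pgt: "p k = 0" if "k > i" for k unfolding p_def using shape(1)[OF FB that] .
  define F' where "F' = (\<Sum>t\<in>Tset i j. scale4 (coeff (rr (fst t)) (snd t)) (Bs i j t))"
  have F'B: "F' \<in> bihom i j" unfolding F'_def by (intro bihom_sum bihom_scale Bs_bihom)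
  have F'S: "F' \<in> V4.span (Bs i j ` Tset i j)"
    unfolding F'_def by (intro V4.span_sum V4.span_scale V4.span_base imageI)
  have OmF': "Om F' = (\<Sum>t\<in>Tset i j. monom (Gp (fst t) * monom (coeff (rr (fst t)) (snd t)) (snd t)) (fst t))"
    unfolding F'_def ev_sum_scale Om_Bs by (simp add: mm1')
  have cF': "coeff (Om F') k = (if k \<in> Kset i j then Gp k * rr k else 0)" for k
  proof -
    let ?f = "\<lambda>t. if fst t = k then Gp (fst t) * monom (coeff (rr (fst t)) (snd t)) (snd t) else 0"
    have "coeff (Om F') k = (\<Sum>t\<in>Tset i j. ?f t)"
      unfolding OmF' coeff_sum coeff_monom by (rule refl)
    also have "\<dots> = (\<Sum>k'\<in>Kset i j. \<Sum>q\<in>{..j - aa k'}. ?f (k', q))"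
      unfolding Tset_def by (subst sum.Sigma) (auto simp: Kset_finite intro!: sum.cong)
    also have "\<dots> = (\<Sum>k'\<in>Kset i j. if k' = k then (\<Sum>q\<in>{..j - aa k}. Gp k * monom (coeff (rr k) q) q) else 0)"
      by (rule sum.cong[OF refl]) simp
    also have "\<dots> = (if k \<in> Kset i j then (\<Sum>q\<le>j - aa k. Gp k * monom (coeff (rr k) q) q) else 0)"
      using Kset_finite by (simp add: sum.delta)
    also have "(\<Sum>q\<le>j - aa k. Gp k * monom (coeff (rr k) q) q) = Gp k * rr k"
      unfolding sum_distrib_left[symmetric] using poly_as_sum_of_monoms'[OF rr2[of k]] by simp
    finally show ?thesis .
  qed
  have "Om F' = Om F"
  proof (rule poly_eqI)
    fix k
    show "coeff (Om F') k = coeff (Om F) k"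
    proof (cases "k \<le> i")
      case True
      then show ?thesis unfolding cF' using rr12[OF True] rr3[OF True] by (auto simp: p_def)
    next
      case False
      then have "k \<notin> Kset i j" by (auto simp: Kset_def)
      then show ?thesis unfolding cF' using pgt[of k] False by (simp add: p_def)
    qed
  qed
  then have OO: "Om F = Om F'" by simp
  have "F = F'" by (rule th_inj2[OF R1nz _ FB F'B, of "(0,1)"]) (use OO in simp_all)
  then show "F \<in> V4.span (Bs i j ` Tset i j)" using F'S by simp
qed

lemma dim_II: "V4.dim (II \<inter> bihom i j) = card (Tset i j)"
  by (rule V4.dim_unique[OF _ II_span Bs_indep(1)]) (auto simp: Bs_II Bs_bihom card_image[OF Bs_indep(2)])

end



lemma final_arith:
  fixes aa :: "nat \<Rightarrow> nat" and K :: "nat set" and m :: nat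
  assumes K: "K = {k. k \<le> i \<and> aa k \<le> j}" and m: "m \<ge> 1" and z: "\<And>h. h \<ge> m \<Longrightarrow> aa h = 0"
  shows "(i+1)*(j+1) - (\<Sum>k\<in>K. j - aa k + 1) = (\<Sum>h = 0..min i (m - 1). min (j + 1) (aa h))"
proof -
  have "(\<Sum>k\<in>K. j - aa k + 1) = (\<Sum>k\<in>{..i}. if aa k \<le> j then j - aa k + 1 else 0)"
  proof -
    have KK: "K = {k \<in> {..i}. aa k \<le> j}" using K by auto
    show ?thesis unfolding KK by (rule sum.inter_filter) simp
  qed
  also have "\<dots> = (\<Sum>k\<le>i. j + 1 - aa k)" by (rule sum.cong) auto
  finally have A: "(\<Sum>k\<in>K. j - aa k + 1) = (\<Sum>k\<le>i. j + 1 - aa k)" .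
  have "(i+1)*(j+1) = (\<Sum>k\<le>i. j + 1)" by simp
  also have "\<dots> = (\<Sum>k\<le>i. min (j+1) (aa k) + (j + 1 - aa k))" by (rule sum.cong) auto
  also have "\<dots> = (\<Sum>k\<le>i. min (j+1) (aa k)) + (\<Sum>k\<le>i. j + 1 - aa k)" by (rule sum.distrib)
  finally have B: "(i+1)*(j+1) - (\<Sum>k\<in>K. j - aa k + 1) = (\<Sum>k\<le>i. min (j+1) (aa k))" using A by simp
  have C: "(\<Sum>k\<le>i. min (j+1) (aa k)) = (\<Sum>h = 0..min i (m - 1). min (j + 1) (aa h))"
  proof (rule sum.mono_neutral_right)
    show "finite {..i}" by simp
    show "{0..min i (m - 1)} \<subseteq> {..i}" by auto
    show "\<forall>k\<in>{..i} - {0..min i (m - 1)}. min (j + 1) (aa k) = 0"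
    proof
      fix k assume "k \<in> {..i} - {0..min i (m - 1)}"
      then have "k \<ge> m" using m by auto
      then show "min (j + 1) (aa k) = 0" using z by simp
    qed
  qed
  show ?thesis using B C by simp
qed

theorem theorem2p2:
  fixes R1 :: "'k::alg_closed_field \<times> 'k"
    and Q :: "nat \<Rightarrow> 'k \<times> 'k"
    and mult :: "nat \<Rightarrow> nat"
    and s :: nat
  assumes "s \<ge> 1"
    and "proj_pt R1"
    and "\<And>j. j < s \<Longrightarrow> proj_pt (Q j)"
    and "\<And>j l. j < s \<Longrightarrow> l < s \<Longrightarrow> j \<noteq> l \<Longrightarrow> \<not> proj_eq (Q j) (Q l)"
    and "\<And>j. j < s \<Longrightarrow> mult j > 0"
  shows "let m = Max (mult ` {..<s});
             a = (\<lambda>h. \<Sum>j<s. mult j - h)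
         in \<forall>i j. hilb_fat s (\<lambda>l. (R1, Q l)) mult i j
                 = (\<Sum>h = 0..min i (m - 1). min (j + 1) (a h))"
proof -
  interpret P: pts R1 Q mult s
  proof
    show "R1 \<noteq> (0,0)" using assms(2) by (simp add: proj_pt_def)
    show "\<And>l. l < s \<Longrightarrow> Q l \<noteq> (0,0)" using assms(3) by (simp add: proj_pt_def)
    show "\<And>l l'. l < s \<Longrightarrow> l' < s \<Longrightarrow> l \<noteq> l' \<Longrightarrow> fst (Q l) * snd (Q l') \<noteq> snd (Q l) * fst (Q l')"
      using assms(4) by (simp add: proj_eq_def)
  qed
  define m where "m = Max (mult ` {..<s})"
  have m1: "m \<ge> 1"
  proof -
    have "mult 0 \<le> m" unfolding m_def using assms(1) by (intro Max_ge) auto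
    then show ?thesis using assms(5)[of 0] assms(1) by simp
  qed
  have z: "P.aa h = 0" if "h \<ge> m" for h
  proof -
    have "mult l - h = 0" if "l < s" for l
    proof -
      have "mult l \<le> m" unfolding m_def using that by (intro Max_ge) auto
      then show ?thesis using \<open>h \<ge> m\<close> by simp
    qed
    then show ?thesis unfolding P.aa_def by simp
  qed
  have main: "hilb_fat s (\<lambda>l. (R1, Q l)) mult i j = (\<Sum>h = 0..min i (m - 1). min (j + 1) (P.aa h))" for i j
  proof -
    have "hilb_fat s (\<lambda>l. (R1, Q l)) mult i j = (i+1)*(j+1) - card (P.Tset i j)"
    proof -
      have d1: "V4.dim (bihom i j :: 'k mpoly4 set) = (i+1)*(j+1)" by (rule dim_bihom)
      have d2: "V4.dim (fat_ideal s (\<lambda>l. (R1, Q l)) mult \<inter> bihom i j) = card (P.Tset i j)"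
        using P.dim_II[of i j] by (simp add: P.II_def)
      show ?thesis unfolding hilb_fat_def d1 d2 by (rule refl)
    qed
    also have "card (P.Tset i j) = (\<Sum>k\<in>P.Kset i j. j - P.aa k + 1)"
      unfolding P.Tset_def using P.Kset_finite by (simp add: card_SigmaI)
    also have "(i+1)*(j+1) - (\<Sum>k\<in>P.Kset i j. j - P.aa k + 1) = (\<Sum>h = 0..min i (m - 1). min (j + 1) (P.aa h))"
      by (rule final_arith[OF _ m1 z]) (simp add: P.Kset_def)
    finally show ?thesis .
  qed
  show ?thesis unfolding Let_def m_def[symmetric] using main by (simp add: P.aa_def)
qed

end
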